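(* Let $0<p<1$ be constant and $G\sim G_{n,p}$, and let $D$ be the set of odd-degree vertices of $G$. Then asymptotically almost surely $G[D]$ has a perfect matching.
   Context: $G_{n,p}$ is the binomial random graph on $n$ vertices with each edge present independently with probability $p$. Asymptotically almost surely means with probability tending to $1$ as $n\to\infty$. *)

theory Defs
  imports Complex_Main
begin

text \<open>Simple graphs on the vertex set {0..<n}: a graph is a set of edges,
  each edge a 2-element set of vertices.\<close>

definition all_edges :: "nat \<Rightarrow> nat set set" where
  "all_edges n = {e. \<exists>u v. u < n \<and> v < n \<and> u \<noteq> v \<and> e = {u, v}}"

text \<open>Probability that G(n,p) satisfies property P: each edge of K_n present
  independently with probability p.\<close>

definition gnp_prob :: "nat \<Rightarrow> real \<Rightarrow> (nat set set \<Rightarrow> bool) \<Rightarrow> real" where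
  "gnp_prob n p P =
     (\<Sum>E\<in>Pow (all_edges n).
        if P E then p ^ card E * (1 - p) ^ (card (all_edges n) - card E) else 0)"

definition degree :: "nat set set \<Rightarrow> nat \<Rightarrow> nat" where
  "degree E v = card {u. {u, v} \<in> E}"

definition odd_vertices :: "nat \<Rightarrow> nat set set \<Rightarrow> nat set" where
  "odd_vertices n E = {v. v < n \<and> odd (degree E v)}"

definition induced_has_perfect_matching :: "nat set set \<Rightarrow> nat set \<Rightarrow> bool" where
  "induced_has_perfect_matching E D =
     (\<exists>M. M \<subseteq> E \<and> (\<forall>e\<in>M. e \<subseteq> D) \<and> (\<forall>v\<in>D. \<exists>!e. e \<in> M \<and> v \<in> e))"

end

theory Submission
  imports Defs "HOL-Real_Asymp.Real_Asymp"
begin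


definition wt :: "'a set \<Rightarrow> real \<Rightarrow> 'a set \<Rightarrow> real" where
  "wt I p E = p ^ card E * (1 - p) ^ (card I - card E)"

definition PP :: "'a set \<Rightarrow> real \<Rightarrow> ('a set \<Rightarrow> bool) \<Rightarrow> real" where
  "PP I p Q = (\<Sum>E\<in>Pow I. if Q E then wt I p E else 0)"

lemma gnp_PP: "gnp_prob n p Q = PP (all_edges n) p Q"
  unfolding gnp_prob_def PP_def wt_def by simp

lemma wt_split:
  assumes "finite I" "F \<subseteq> I" "S \<subseteq> I - F" "T \<subseteq> F"
  shows "wt I p (S \<union> T) = wt (I - F) p S * wt F p T"
proof -
  have fF: "finite F" by (rule finite_subset[OF assms(2,1)])
  have fin: "finite S" "finite T" "finite F"
    using assms(3) assms(1) fF assms(4) by (auto intro: finite_subset)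
  have d: "S \<inter> T = {}" using assms by blast
  have c1: "card (S \<union> T) = card S + card T" using fin d by (simp add: card_Un_disjoint)
  have c2: "card (I - F) = card I - card F" using assms by (simp add: card_Diff_subset finite_subset)
  have c3: "card S \<le> card (I - F)" using assms by (simp add: card_mono)
  have c4: "card T \<le> card F" using assms fin by (simp add: card_mono)
  have c5: "card F \<le> card I" using assms by (simp add: card_mono)
  have "card I - card (S \<union> T) = (card (I - F) - card S) + (card F - card T)"
    using c1 c2 c3 c4 c5 by linarith
  then show ?thesis unfolding wt_def c1 by (simp add: power_add algebra_simps)
qed

lemma PP_factor:
  assumes "finite I" "F \<subseteq> I"
  shows "PP I p Q = (\<Sum>S\<in>Pow (I - F). wt (I - F) p S * PP F p (\<lambda>T. Q (S \<union> T)))"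
proof -
  let ?g = "\<lambda>E. if Q E then wt I p E else 0"
  have inj: "inj_on (\<lambda>(S, T). S \<union> T) (Pow (I - F) \<times> Pow F)"
    by (rule inj_on_inverseI[where g="\<lambda>E. (E - F, E \<inter> F)"]) auto
  have img: "(\<lambda>(S, T). S \<union> T) ` (Pow (I - F) \<times> Pow F) = Pow I"
  proof
    show "(\<lambda>(S, T). S \<union> T) ` (Pow (I - F) \<times> Pow F) \<subseteq> Pow I" using assms by auto
    show "Pow I \<subseteq> (\<lambda>(S, T). S \<union> T) ` (Pow (I - F) \<times> Pow F)"
    proof
      fix E assume "E \<in> Pow I"
      then have "(E - F, E \<inter> F) \<in> Pow (I - F) \<times> Pow F" "E = (\<lambda>(S, T). S \<union> T) (E - F, E \<inter> F)" by auto
      then show "E \<in> (\<lambda>(S, T). S \<union> T) ` (Pow (I - F) \<times> Pow F)" by blast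
    qed
  qed
  have "PP I p Q = (\<Sum>E\<in>Pow I. ?g E)" by (simp add: PP_def)
  also have "\<dots> = (\<Sum>x\<in>Pow (I - F) \<times> Pow F. ?g ((\<lambda>(S, T). S \<union> T) x))"
    by (subst img[symmetric], rule sum.reindex[OF inj, unfolded comp_def])
  also have "\<dots> = (\<Sum>S\<in>Pow (I - F). \<Sum>T\<in>Pow F. ?g (S \<union> T))"
    by (subst sum.cartesian_product) (auto intro!: sum.cong)
  also have "\<dots> = (\<Sum>S\<in>Pow (I - F). wt (I - F) p S * PP F p (\<lambda>T. Q (S \<union> T)))"
    unfolding PP_def sum_distrib_left
    by (intro sum.cong refl) (auto simp: wt_split[OF assms])
  finally show ?thesis .
qed

lemma PP_True: "finite I \<Longrightarrow> PP I p (\<lambda>_. True) = 1"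
proof (induction I rule: finite_induct)
  case empty then show ?case by (simp add: PP_def wt_def)
next
  case (insert e I)
  have s: "{e} \<subseteq> insert e I" by simp
  have e1: "PP {e} p (\<lambda>_. True) = 1"
    by (simp add: PP_def wt_def Pow_insert)
  have "insert e I - {e} = I" using insert by auto
  then have "PP (insert e I) p (\<lambda>_. True) = (\<Sum>S\<in>Pow I. wt I p S)"
    using PP_factor[OF _ s, of p "\<lambda>_. True"] insert e1 by simp
  also have "\<dots> = 1" using insert by (simp add: PP_def)
  finally show ?case .
qed

lemma wt_nonneg: "0 \<le> p \<Longrightarrow> p \<le> 1 \<Longrightarrow> 0 \<le> wt I p E"
  by (simp add: wt_def)

lemma PP_nonneg: "0 \<le> p \<Longrightarrow> p \<le> 1 \<Longrightarrow> 0 \<le> PP I p Q"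
  unfolding PP_def by (intro sum_nonneg) (simp add: wt_nonneg)

lemma PP_mono:
  assumes "0 \<le> p" "p \<le> 1" "\<And>E. E \<subseteq> I \<Longrightarrow> Q E \<Longrightarrow> R E"
  shows "PP I p Q \<le> PP I p R"
  unfolding PP_def using assms by (intro sum_mono) (auto simp: wt_nonneg)

lemma PP_compl:
  assumes "finite I"
  shows "PP I p Q = 1 - PP I p (\<lambda>E. \<not> Q E)"
proof -
  have "PP I p Q + PP I p (\<lambda>E. \<not> Q E) = PP I p (\<lambda>_. True)"
    unfolding PP_def sum.distrib[symmetric] by (intro sum.cong) auto
  then show ?thesis using PP_True[OF assms] by simp
qed

lemma PP_le1: "finite I \<Longrightarrow> 0 \<le> p \<Longrightarrow> p \<le> 1 \<Longrightarrow> PP I p Q \<le> 1"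
  using PP_compl[of I p Q] PP_nonneg[of p I "\<lambda>E. \<not> Q E"] by simp

lemma PP_union:
  assumes "0 \<le> p" "p \<le> 1" "finite J"
  shows "PP I p (\<lambda>E. \<exists>j\<in>J. Q j E) \<le> (\<Sum>j\<in>J. PP I p (Q j))"
proof -
  have "PP I p (\<lambda>E. \<exists>j\<in>J. Q j E) \<le> (\<Sum>E\<in>Pow I. \<Sum>j\<in>J. if Q j E then wt I p E else 0)"
    unfolding PP_def
  proof (intro sum_mono)
    fix E assume "E \<in> Pow I"
    show "(if \<exists>j\<in>J. Q j E then wt I p E else 0) \<le> (\<Sum>j\<in>J. if Q j E then wt I p E else 0)"
    proof (cases "\<exists>j\<in>J. Q j E")
      case True
      then obtain j where j: "j \<in> J" "Q j E" by blast
      have "(if Q j E then wt I p E else 0) \<le> (\<Sum>j\<in>J. if Q j E then wt I p E else 0)"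
        by (rule member_le_sum[OF j(1)]) (use assms in \<open>auto simp: wt_nonneg\<close>)
      then show ?thesis using True j by simp
    next
      case False
      then show ?thesis using assms by (simp add: sum_nonneg wt_nonneg)
    qed
  qed
  also have "\<dots> = (\<Sum>j\<in>J. PP I p (Q j))" unfolding PP_def by (rule sum.swap)
  finally show ?thesis .
qed

lemma PP_peel:
  assumes "finite I" "F \<subseteq> I" "0 \<le> p" "p \<le> 1" "0 \<le> r"
    and A: "\<And>S T. S \<subseteq> I - F \<Longrightarrow> T \<subseteq> F \<Longrightarrow> A (S \<union> T) = A S"
    and B: "\<And>S. S \<subseteq> I - F \<Longrightarrow> PP F p (\<lambda>T. B (S \<union> T)) \<le> r"
  shows "PP I p (\<lambda>E. A E \<and> B E) \<le> r * PP I p A"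
proof -
  have fF: "finite F" by (rule finite_subset[OF assms(2,1)])
  have "PP I p (\<lambda>E. A E \<and> B E) = (\<Sum>S\<in>Pow (I - F). wt (I - F) p S * (if A S then PP F p (\<lambda>T. B (S \<union> T)) else 0))"
    unfolding PP_factor[OF assms(1,2)]
  proof (intro sum.cong refl)
    fix S assume S: "S \<in> Pow (I - F)"
    show "wt (I - F) p S * PP F p (\<lambda>T. A (S \<union> T) \<and> B (S \<union> T)) =
      wt (I - F) p S * (if A S then PP F p (\<lambda>T. B (S \<union> T)) else 0)"
      using A[of S] S by (auto simp: PP_def intro!: sum.cong)
  qed
  also have "\<dots> \<le> (\<Sum>S\<in>Pow (I - F). wt (I - F) p S * (if A S then r else 0))"
    using B assms by (intro sum_mono mult_left_mono) (auto simp: wt_nonneg)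
  also have "\<dots> = r * PP I p A"
    unfolding PP_factor[OF assms(1,2)] sum_distrib_left
  proof (intro sum.cong refl)
    fix S assume S: "S \<in> Pow (I - F)"
    have "PP F p (\<lambda>T. A (S \<union> T)) = (if A S then 1 else 0)"
      using A[of S] S PP_True[OF fF, of p] by (auto simp: PP_def)
    then show "wt (I - F) p S * (if A S then r else 0) = r * (wt (I - F) p S * PP F p (\<lambda>T. A (S \<union> T)))"
      by simp
  qed
  finally show ?thesis .
qed



lemma all_edges_finite: "finite (all_edges n)"
proof -
  have "all_edges n \<subseteq> Pow {..<n}" by (auto simp: all_edges_def)
  then show ?thesis by (rule finite_subset) simp
qed

lemma all_edgesE:
  assumes "e \<in> all_edges n"
  obtains u v where "u < n" "v < n" "u \<noteq> v" "e = {u, v}"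
  using assms by (auto simp: all_edges_def)

lemma edge_mem_lt: "{u, v} \<in> all_edges n \<Longrightarrow> u < n"
  by (auto simp: all_edges_def doubleton_eq_iff)

lemma edge_ne: "{u, v} \<in> all_edges n \<Longrightarrow> u \<noteq> v"
  by (auto simp: all_edges_def doubleton_eq_iff)

lemma handshake:
  assumes E: "E \<subseteq> all_edges n"
  shows "even (card (odd_vertices n E))"
proof -
  have fE: "finite E" using E all_edges_finite finite_subset by blast
  let ?P = "{(v, u). {u, v} \<in> E}"
  have sumdeg: "(\<Sum>v<n. degree E v) = card ?P"
  proof -
    have "?P = (SIGMA v:{..<n}. {u. {u, v} \<in> E})"
      using E by (auto dest: edge_mem_lt simp: insert_commute)
    moreover have "\<And>v. finite {u. {u, v} \<in> E}"
    proof -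
      fix v
      have "{u. {u, v} \<in> E} \<subseteq> {..<n}" using E by (auto dest: edge_mem_lt)
      then show "finite {u. {u, v} \<in> E}" using finite_subset by blast
    qed
    ultimately show ?thesis by (simp add: degree_def card_SigmaI)
  qed
  have Pe: "?P = (\<Union>e\<in>E. {(v, u). {u, v} = e})" by auto
  have c2: "\<And>e. e \<in> E \<Longrightarrow> card {(v, u). {u, v} = e} = 2"
  proof -
    fix e assume "e \<in> E"
    then have "e \<in> all_edges n" using E by blast
    then obtain a b where ab: "a \<noteq> b" "e = {a, b}" by (rule all_edgesE)
    then have "{(v, u). {u, v} = e} = {(a, b), (b, a)}" by (auto simp: doubleton_eq_iff)
    then show "card {(v, u). {u, v} = e} = 2" using ab by simp
  qed
  have "card ?P = (\<Sum>e\<in>E. card {(v, u). {u, v} = e})"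
    unfolding Pe
  proof (rule card_UN_disjoint[OF fE])
    show "\<forall>e\<in>E. finite {(v, u). {u, v} = e}"
      using c2 card.infinite by (metis zero_neq_numeral)
    show "\<forall>e\<in>E. \<forall>e'\<in>E. e \<noteq> e' \<longrightarrow> {(v, u). {u, v} = e} \<inter> {(v, u). {u, v} = e'} = {}"
      by auto
  qed
  also have "\<dots> = 2 * card E" using c2 by simp
  finally have "even (\<Sum>v<n. degree E v)" using sumdeg by simp
  then have "even (card {v\<in>{..<n}. odd (degree E v)})" by (simp add: even_sum_iff)
  moreover have "{v\<in>{..<n}. odd (degree E v)} = odd_vertices n E" by (auto simp: odd_vertices_def)
  ultimately show ?thesis by simp
qed



definition matching :: "nat set set \<Rightarrow> nat set \<Rightarrow> nat set set \<Rightarrow> bool" where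
  "matching E D M \<longleftrightarrow> M \<subseteq> E \<and> (\<forall>e\<in>M. e \<subseteq> D) \<and> (\<forall>e\<in>M. \<forall>e'\<in>M. e \<noteq> e' \<longrightarrow> e \<inter> e' = {})"

definition good2 :: "nat \<Rightarrow> nat \<Rightarrow> nat set set \<Rightarrow> bool" where
  "good2 n k E \<longleftrightarrow> (\<forall>A B. A \<subseteq> {..<n} \<longrightarrow> B \<subseteq> {..<n} \<longrightarrow> A \<inter> B = {} \<longrightarrow> card A = k \<longrightarrow> card B = k
      \<longrightarrow> (\<exists>a\<in>A. \<exists>b\<in>B. {a, b} \<in> E))"

lemma edge_partner:
  assumes "e \<in> all_edges n" "x \<in> e"
  shows "\<exists>y. y \<noteq> x \<and> e = {x, y}"
  using assms by (auto simp: all_edges_def)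

lemma matching_cover_card:
  assumes E: "E \<subseteq> all_edges n" and M: "matching E D M" and X: "X \<subseteq> \<Union>M"
  shows "card X \<le> 2 * card {e\<in>M. e \<inter> X \<noteq> {}}"
proof -
  have fE: "finite E" using E all_edges_finite finite_subset by blast
  have fM: "finite M" using M fE by (auto simp: matching_def intro: finite_subset)
  have c2: "\<And>e. e \<in> M \<Longrightarrow> card e = 2"
  proof -
    fix e assume "e \<in> M"
    then have "e \<in> all_edges n" using M E by (auto simp: matching_def)
    then show "card e = 2" by (auto simp: all_edges_def)
  qed
  have fU: "finite (\<Union>M)" using fM c2 card.infinite by (metis finite_Union zero_neq_numeral)
  have "X \<subseteq> \<Union>{e\<in>M. e \<inter> X \<noteq> {}}" using X by blast
  then have "card X \<le> card (\<Union>{e\<in>M. e \<inter> X \<noteq> {}})"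
    by (rule card_mono[rotated]) (use fU in \<open>auto intro: finite_subset\<close>)
  also have "\<dots> \<le> sum card {e\<in>M. e \<inter> X \<noteq> {}}" by (rule card_Union_le_sum_card)
  also have "\<dots> = 2 * card {e\<in>M. e \<inter> X \<noteq> {}}" using c2 by simp
  finally show ?thesis .
qed

lemma augment_direct:
  assumes E: "E \<subseteq> all_edges n" and M: "matching E D M" and u: "u \<in> D" "u \<notin> \<Union>M"
    and z: "z \<in> D" "{u, z} \<in> E" "z \<notin> \<Union>M"
  shows "\<exists>M'. matching E D M' \<and> card M < card M'"
proof -
  have fE: "finite E" using E all_edges_finite finite_subset by blast
  have fM: "finite M" using M fE by (auto simp: matching_def intro: finite_subset)
  have nin: "{u, z} \<notin> M" using u by auto
  have "matching E D (insert {u, z} M)"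
    using M u z unfolding matching_def by blast
  moreover have "card (insert {u, z} M) = Suc (card M)" using fM nin by simp
  ultimately show ?thesis by (intro exI[of _ "insert {u, z} M"]) simp
qed

lemma augment_path:
  assumes E: "E \<subseteq> all_edges n" and M: "matching E D M" and D: "D \<subseteq> {..<n}"
    and deg: "\<And>v. v < n \<Longrightarrow> 4 * k + 2 \<le> card ({z. {v, z} \<in> E} \<inter> D)"
    and g2: "good2 n k E"
    and u: "u \<in> D" "u \<notin> \<Union>M" and w: "w \<in> D" "w \<notin> \<Union>M" and uw: "u \<noteq> w"
  shows "\<exists>M'. matching E D M' \<and> card M < card M'"
proof (cases "\<exists>z\<in>{z. {u, z} \<in> E} \<inter> D. z \<notin> \<Union>M")
  case True
  then show ?thesis using augment_direct[OF E M u] by blast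
next
  case Fu: False
  show ?thesis
  proof (cases "\<exists>z\<in>{z. {w, z} \<in> E} \<inter> D. z \<notin> \<Union>M")
    case True
    then show ?thesis using augment_direct[OF E M w] by blast
  next
    case Fw: False
    have fE: "finite E" using E all_edges_finite finite_subset by blast
    have fM: "finite M" using M fE by (auto simp: matching_def intro: finite_subset)
    have MD: "\<And>e. e \<in> M \<Longrightarrow> e \<subseteq> D" and ME: "M \<subseteq> E"
      and Mdisj: "\<And>e e'. e \<in> M \<Longrightarrow> e' \<in> M \<Longrightarrow> e \<noteq> e' \<Longrightarrow> e \<inter> e' = {}"
      using M by (auto simp: matching_def)
    have Mall: "\<And>e. e \<in> M \<Longrightarrow> e \<in> all_edges n" using ME E by blast
    define NU where "NU = {z. {u, z} \<in> E} \<inter> D"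
    define NW where "NW = {z. {w, z} \<in> E} \<inter> D"
    define Mu where "Mu = {e\<in>M. e \<inter> NU \<noteq> {}}"
    define Mw where "Mw = {e\<in>M. e \<inter> NW \<noteq> {}}"
    have un: "u < n" "w < n" using u w D by auto
    have "4 * k + 2 \<le> card NU" using deg[OF un(1)] by (simp add: NU_def)
    also have "\<dots> \<le> 2 * card Mu" unfolding Mu_def
      by (rule matching_cover_card[OF E M]) (use Fu in \<open>auto simp: NU_def\<close>)
    finally have cMu: "k \<le> card Mu" by simp
    have "4 * k + 2 \<le> card NW" using deg[OF un(2)] by (simp add: NW_def)
    also have "\<dots> \<le> 2 * card Mw" unfolding Mw_def
      by (rule matching_cover_card[OF E M]) (use Fw in \<open>auto simp: NW_def\<close>)
    finally have cMw: "2 * k + 1 \<le> card Mw" by simp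
    obtain F1 where F1: "F1 \<subseteq> Mu" "card F1 = k" "finite F1"
      using obtain_subset_with_card_n[OF cMu] by blast
    have fMw: "finite Mw" using fM by (simp add: Mw_def)
    have "card Mw - card F1 \<le> card (Mw - F1)" by (rule diff_card_le_card_Diff[OF F1(3)])
    then have "k \<le> card (Mw - F1)" using cMw F1 by simp
    then obtain F2 where F2: "F2 \<subseteq> Mw - F1" "card F2 = k" "finite F2"
      using obtain_subset_with_card_n by blast
    define sx where "sx e = (SOME x. x \<in> e \<inter> NU)" for e
    define sy where "sy e = (SOME y. y \<noteq> sx e \<and> e = {sx e, y})" for e
    define tx where "tx e = (SOME x. x \<in> e \<inter> NW)" for e
    define ty where "ty e = (SOME y. y \<noteq> tx e \<and> e = {tx e, y})" for e
    have s1: "sx e \<in> e \<inter> NU" "sy e \<noteq> sx e" "e = {sx e, sy e}" if "e \<in> F1" for e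
    proof -
      have eM: "e \<in> Mu" using that F1 by blast
      then have "\<exists>x. x \<in> e \<inter> NU" by (auto simp: Mu_def)
      then show sxe: "sx e \<in> e \<inter> NU" unfolding sx_def by (rule someI_ex)
      have "\<exists>y. y \<noteq> sx e \<and> e = {sx e, y}"
        by (rule edge_partner[OF Mall]) (use eM sxe in \<open>auto simp: Mu_def\<close>)
      then have "sy e \<noteq> sx e \<and> e = {sx e, sy e}" unfolding sy_def by (rule someI_ex)
      then show "sy e \<noteq> sx e" "e = {sx e, sy e}" by auto
    qed
    have t1: "tx e \<in> e \<inter> NW" "ty e \<noteq> tx e" "e = {tx e, ty e}" if "e \<in> F2" for e
    proof -
      have eM: "e \<in> Mw" using that F2 by blast
      then have "\<exists>x. x \<in> e \<inter> NW" by (auto simp: Mw_def)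
      then show txe: "tx e \<in> e \<inter> NW" unfolding tx_def by (rule someI_ex)
      have "\<exists>y. y \<noteq> tx e \<and> e = {tx e, y}"
        by (rule edge_partner[OF Mall]) (use eM txe in \<open>auto simp: Mw_def\<close>)
      then have "ty e \<noteq> tx e \<and> e = {tx e, ty e}" unfolding ty_def by (rule someI_ex)
      then show "ty e \<noteq> tx e" "e = {tx e, ty e}" by auto
    qed
    have F1M: "F1 \<subseteq> M" using F1 by (auto simp: Mu_def)
    have F2M: "F2 \<subseteq> M" using F2 by (auto simp: Mw_def)
    have F12: "F1 \<inter> F2 = {}" using F2 by blast
    have syin: "sy e \<in> e" if "e \<in> F1" for e by (subst s1(3)[OF that]) simp
    have tyin: "ty e \<in> e" if "e \<in> F2" for e by (subst t1(3)[OF that]) simp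
    have injA: "inj_on sy F1"
    proof (rule inj_onI)
      fix e e' assume e: "e \<in> F1" "e' \<in> F1" "sy e = sy e'"
      have i: "sy e \<in> e" "sy e' \<in> e'" by (rule syin[OF e(1)], rule syin[OF e(2)])
      have m: "e \<in> M" "e' \<in> M" using e(1,2) F1M by auto
      have "sy e \<in> e \<inter> e'" using i e(3) by simp
      then show "e = e'" using Mdisj[OF m] by (metis empty_iff)
    qed
    have injB: "inj_on ty F2"
    proof (rule inj_onI)
      fix e e' assume e: "e \<in> F2" "e' \<in> F2" "ty e = ty e'"
      have i: "ty e \<in> e" "ty e' \<in> e'" by (rule tyin[OF e(1)], rule tyin[OF e(2)])
      have m: "e \<in> M" "e' \<in> M" using e(1,2) F2M by auto
      have "ty e \<in> e \<inter> e'" using i e(3) by simp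
      then show "e = e'" using Mdisj[OF m] by (metis empty_iff)
    qed
    have cA: "card (sy ` F1) = k" using card_image[OF injA] F1 by simp
    have cB: "card (ty ` F2) = k" using card_image[OF injB] F2 by simp
    have AB: "sy ` F1 \<inter> ty ` F2 = {}"
    proof (rule ccontr)
      assume "sy ` F1 \<inter> ty ` F2 \<noteq> {}"
      then obtain e1 e2 where e: "e1 \<in> F1" "e2 \<in> F2" "sy e1 = ty e2" by blast
      then have "e1 \<noteq> e2" using F12 by blast
      moreover have m: "e1 \<in> M" "e2 \<in> M" using e(1,2) F1M F2M by auto
      moreover have "ty e2 \<in> e1 \<inter> e2" using syin[OF e(1)] tyin[OF e(2)] e(3) by simp
      ultimately show False using Mdisj by (metis empty_iff)
    qed
    have An: "sy ` F1 \<subseteq> {..<n}" using syin MD F1M D by blast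
    have Bn: "ty ` F2 \<subseteq> {..<n}" using tyin MD F2M D by blast
    obtain a b where ab: "a \<in> sy ` F1" "b \<in> ty ` F2" "{a, b} \<in> E"
      using g2[unfolded good2_def, rule_format, OF An Bn AB cA cB] by blast
    then obtain e1 e2 where e12: "e1 \<in> F1" "e2 \<in> F2" "a = sy e1" "b = ty e2" by blast
    define x where "x = sx e1"
    define y where "y = tx e2"
    have e1eq: "e1 = {x, a}" "x \<noteq> a" using s1[OF e12(1)] e12 x_def by auto
    have e2eq: "e2 = {y, b}" "y \<noteq> b" using t1[OF e12(2)] e12 y_def by auto
    have xN: "x \<in> NU" using s1[OF e12(1)] x_def by auto
    have yN: "y \<in> NW" using t1[OF e12(2)] y_def by auto
    have e1M: "e1 \<in> M" and e2M: "e2 \<in> M" using e12 F1M F2M by auto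
    have ne12: "e1 \<noteq> e2" using e12 F12 by blast
    have d12: "e1 \<inter> e2 = {}" using Mdisj[OF e1M e2M ne12] .
    have other: "e \<inter> e1 = {} \<and> e \<inter> e2 = {}" if "e \<in> M - {e1, e2}" for e
      using that Mdisj[of e e1] Mdisj[of e e2] e1M e2M by auto
    have uwnot: "u \<notin> e" "w \<notin> e" if "e \<in> M" for e using that u w by auto
    have xD: "x \<in> D" "a \<in> D" "y \<in> D" "b \<in> D" using MD[OF e1M] MD[OF e2M] e1eq e2eq by auto
    have Eux: "{u, x} \<in> E" using xN by (simp add: NU_def)
    have Ewy: "{y, w} \<in> E" using yN by (simp add: NW_def insert_commute)
    have un1: "u \<notin> e1" "u \<notin> e2" "w \<notin> e1" "w \<notin> e2" using uwnot e1M e2M by auto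
    define M' where "M' = (M - {e1, e2}) \<union> {{u, x}, {a, b}, {y, w}}"
    have "matching E D M'"
      unfolding matching_def M'_def
    proof (intro conjI ballI impI)
      show "M - {e1, e2} \<union> {{u, x}, {a, b}, {y, w}} \<subseteq> E" using ME Eux Ewy ab(3) by auto
    next
      fix e assume "e \<in> M - {e1, e2} \<union> {{u, x}, {a, b}, {y, w}}"
      then show "e \<subseteq> D" using MD xD u w by auto
    next
      fix e e' assume e: "e \<in> M - {e1, e2} \<union> {{u, x}, {a, b}, {y, w}}"
        and e': "e' \<in> M - {e1, e2} \<union> {{u, x}, {a, b}, {y, w}}" and ne: "e \<noteq> e'"
      show "e \<inter> e' = {}"
      proof -
        have A1: "\<And>f. f \<in> M - {e1, e2} \<Longrightarrow> u \<notin> f \<and> w \<notin> f \<and> x \<notin> f \<and> a \<notin> f \<and> y \<notin> f \<and> b \<notin> f"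
          using other uwnot e1eq e2eq by blast
        have A2: "u \<noteq> x" "u \<noteq> a" "u \<noteq> y" "u \<noteq> b" "w \<noteq> x" "w \<noteq> a" "w \<noteq> y" "w \<noteq> b"
          using un1 e1eq e2eq by auto
        have A3: "x \<noteq> y" "x \<noteq> b" "a \<noteq> y" "a \<noteq> b" using d12 e1eq e2eq by auto
        have B0: "y \<noteq> b" by (rule e2eq(2))
        have on: "f \<inter> g = {}" if "f \<in> M - {e1, e2}" "g \<in> {{u, x}, {a, b}, {y, w}}" for f g
          using A1[OF that(1)] that(2) by auto
        have nn: "g \<inter> g' = {}" if "g \<in> {{u, x}, {a, b}, {y, w}}" "g' \<in> {{u, x}, {a, b}, {y, w}}" "g \<noteq> g'" for g g'
          using that by (elim insertE emptyE)
            (simp_all add: A2 A3 uw B0 A2[symmetric] A3[symmetric] uw[symmetric] B0[symmetric] e1eq(2) e1eq(2)[symmetric])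
        have oo: "f \<inter> f' = {}" if "f \<in> M - {e1, e2}" "f' \<in> M - {e1, e2}" "f \<noteq> f'" for f f'
          using that Mdisj by auto
        show ?thesis
        proof (cases "e \<in> M - {e1, e2}")
          case T1: True
          show ?thesis
          proof (cases "e' \<in> M - {e1, e2}")
            case True then show ?thesis using oo T1 ne by blast
          next
            case False then have "e' \<in> {{u, x}, {a, b}, {y, w}}" using e' by blast
            then show ?thesis using on T1 by blast
          qed
        next
          case F1: False
          then have eN: "e \<in> {{u, x}, {a, b}, {y, w}}" using e by blast
          show ?thesis
          proof (cases "e' \<in> M - {e1, e2}")
            case True then show ?thesis using on[OF True eN] by blast
          next
            case False then have "e' \<in> {{u, x}, {a, b}, {y, w}}" using e' by blast
            then show ?thesis using nn eN ne by blast
          qed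
        qed
      qed
    qed
    moreover have "card M' = Suc (card M)"
    proof -
      have A1: "\<And>f. f \<in> M - {e1, e2} \<Longrightarrow> u \<notin> f \<and> w \<notin> f \<and> a \<notin> f"
        using other uwnot e1eq by blast
      have dj: "(M - {e1, e2}) \<inter> {{u, x}, {a, b}, {y, w}} = {}" using A1 by auto
      have A2: "{u, x} \<noteq> {a, b}" "{u, x} \<noteq> {y, w}" "{a, b} \<noteq> {y, w}"
        using un1 e1eq e2eq uw d12 by (auto simp: doubleton_eq_iff)
      have c3: "card {{u, x}, {a, b}, {y, w}} = 3" using A2 by simp
      have cM: "card (M - {e1, e2}) = card M - 2" using e1M e2M ne12 fM by (simp add: card_Diff_subset)
      have "card {e1, e2} \<le> card M" using e1M e2M by (intro card_mono[OF fM]) auto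
      then have "card M \<ge> 2" using ne12 by simp
      then show ?thesis unfolding M'_def using card_Un_disjoint[OF _ _ dj] fM c3 cM by simp
    qed
    ultimately show ?thesis by auto
  qed
qed

lemma det_pm:
  assumes E: "E \<subseteq> all_edges n"
    and deg: "\<And>v. v < n \<Longrightarrow> 4 * k + 2 \<le> card ({z. {v, z} \<in> E} \<inter> odd_vertices n E)"
    and g2: "good2 n k E"
  shows "induced_has_perfect_matching E (odd_vertices n E)"
proof -
  define D where "D = odd_vertices n E"
  have Dn: "D \<subseteq> {..<n}" by (auto simp: D_def odd_vertices_def)
  have fD: "finite D" using Dn finite_subset by blast
  have fE: "finite E" using E all_edges_finite finite_subset by blast
  have "matching E D {}" by (simp add: matching_def)
  moreover have "\<forall>M. matching E D M \<longrightarrow> card M < Suc (card E)"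
    using fE by (auto simp: matching_def less_Suc_eq_le intro: card_mono)
  ultimately obtain M where M: "matching E D M" and Mmax: "\<And>M'. matching E D M' \<Longrightarrow> card M' \<le> card M"
    using ex_has_greatest_nat[of "matching E D" "{}" card "Suc (card E)"] by blast
  have ME: "M \<subseteq> E" and MD: "\<And>e. e \<in> M \<Longrightarrow> e \<subseteq> D"
    and Mdisj: "\<And>e e'. e \<in> M \<Longrightarrow> e' \<in> M \<Longrightarrow> e \<noteq> e' \<Longrightarrow> e \<inter> e' = {}"
    using M by (auto simp: matching_def)
  have fM: "finite M" using ME fE finite_subset by blast
  have c2: "\<And>e. e \<in> M \<Longrightarrow> card e = 2"
  proof -
    fix e assume "e \<in> M"
    then have "e \<in> all_edges n" using ME E by blast
    then show "card e = 2" by (auto simp: all_edges_def)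
  qed
  have finE: "\<And>e. e \<in> M \<Longrightarrow> finite e" using c2 card.infinite by (metis zero_neq_numeral)
  show ?thesis
  proof (cases "D \<subseteq> \<Union>M")
    case True
    show ?thesis unfolding induced_has_perfect_matching_def D_def[symmetric]
    proof (intro exI[of _ M] conjI ballI)
      show "M \<subseteq> E" by (rule ME)
      show "\<And>e. e \<in> M \<Longrightarrow> e \<subseteq> D" by (rule MD)
      fix v assume v: "v \<in> D"
      then obtain e where e: "e \<in> M" "v \<in> e" using True by blast
      show "\<exists>!e. e \<in> M \<and> v \<in> e"
      proof (rule ex1I[of _ e])
        show "e \<in> M \<and> v \<in> e" using e by simp
        fix e' assume "e' \<in> M \<and> v \<in> e'"
        then show "e' = e" using Mdisj[of e' e] e by blast
      qed
    qed
  next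
    case False
    then obtain u where u: "u \<in> D" "u \<notin> \<Union>M" by blast
    have UD: "\<Union>M \<subseteq> D" using MD by blast
    have "pairwise disjnt M" using Mdisj by (auto simp: pairwise_def disjnt_def)
    then have cU: "card (\<Union>M) = 2 * card M" using card_Union_disjoint[of M] finE c2 by simp
    have "card D = card (\<Union>M) + card (D - \<Union>M)"
      using card_Diff_subset[OF finite_subset[OF UD fD] UD] card_mono[OF fD UD] by simp
    moreover have "even (card D)" unfolding D_def by (rule handshake[OF E])
    ultimately have evR: "even (card (D - \<Union>M))" using cU by simp
    have "\<exists>w. w \<in> D - \<Union>M \<and> w \<noteq> u"
    proof (rule ccontr)
      assume "\<not> ?thesis"
      then have "D - \<Union>M = {u}" using u by blast
      then show False using evR by simp
    qed
    then obtain w where w: "w \<in> D" "w \<notin> \<Union>M" "w \<noteq> u" by blast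
    have degD: "\<And>v. v < n \<Longrightarrow> 4 * k + 2 \<le> card ({z. {v, z} \<in> E} \<inter> D)"
      using deg by (simp add: D_def)
    obtain M' where "matching E D M'" "card M < card M'"
      using augment_path[OF E M Dn degD g2 u w(1,2)] w(3) by metis
    then show ?thesis using Mmax by fastforce
  qed
qed



lemma PP_avoid:
  assumes "finite I" "F \<subseteq> I" "0 \<le> p" "p \<le> 1"
  shows "PP I p (\<lambda>E. E \<inter> F = {}) \<le> (1 - p) ^ card F"
proof -
  have "PP I p (\<lambda>E. True \<and> E \<inter> F = {}) \<le> (1 - p) ^ card F * PP I p (\<lambda>_. True)"
  proof (rule PP_peel[OF assms])
    show "0 \<le> (1 - p) ^ card F" using assms by simp
    fix S assume S: "S \<subseteq> I - F"
    have "PP F p (\<lambda>T. (S \<union> T) \<inter> F = {}) = (\<Sum>T\<in>Pow F. if T = {} then wt F p T else 0)"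
      unfolding PP_def using S by (intro sum.cong refl) (auto simp: Int_absorb2)
    also have "\<dots> = wt F p {}" using finite_subset[OF assms(2,1)] by (simp add: sum.delta)
    finally show "PP F p (\<lambda>T. (S \<union> T) \<inter> F = {}) \<le> (1 - p) ^ card F" by (simp add: wt_def)
  qed simp
  then show ?thesis using PP_True[OF assms(1)] by simp
qed

lemma PP_prod:
  assumes "finite I" "finite J" "0 \<le> p" "p \<le> 1" "0 \<le> r"
    and F: "\<And>j. j \<in> J \<Longrightarrow> F j \<subseteq> I"
    and inv: "\<And>i j S T. i \<in> J \<Longrightarrow> j \<in> J \<Longrightarrow> i \<noteq> j \<Longrightarrow> S \<subseteq> I - F j \<Longrightarrow> T \<subseteq> F j \<Longrightarrow> B i (S \<union> T) = B i S"
    and bd: "\<And>j S. j \<in> J \<Longrightarrow> S \<subseteq> I - F j \<Longrightarrow> PP (F j) p (\<lambda>T. B j (S \<union> T)) \<le> r"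
  shows "PP I p (\<lambda>E. \<forall>j\<in>J. B j E) \<le> r ^ card J"
  using assms(2) F inv bd
proof (induction J rule: finite_induct)
  case empty
  then show ?case using PP_True[OF assms(1)] by simp
next
  case (insert j J)
  have "PP I p (\<lambda>E. \<forall>i\<in>insert j J. B i E) = PP I p (\<lambda>E. (\<forall>i\<in>J. B i E) \<and> B j E)"
    unfolding PP_def by (intro sum.cong refl) auto
  also have "\<dots> \<le> r * PP I p (\<lambda>E. \<forall>i\<in>J. B i E)"
  proof (rule PP_peel[OF assms(1) insert.prems(1)[of j] assms(3,4,5)])
    show "j \<in> insert j J" by simp
    fix S T assume "S \<subseteq> I - F j" "T \<subseteq> F j"
    then show "(\<forall>i\<in>J. B i (S \<union> T)) = (\<forall>i\<in>J. B i S)"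
      using insert.prems(2)[of _ j S T] insert.hyps(2) by auto
  next
    fix S assume "S \<subseteq> I - F j"
    then show "PP (F j) p (\<lambda>T. B j (S \<union> T)) \<le> r" using insert.prems(3)[of j S] by simp
  qed
  also have "\<dots> \<le> r * r ^ card J"
  proof (intro mult_left_mono assms(5))
    show "PP I p (\<lambda>E. \<forall>j\<in>J. B j E) \<le> r ^ card J"
    proof (rule insert.IH)
      show "\<And>j. j \<in> J \<Longrightarrow> F j \<subseteq> I" using insert.prems(1) by simp
      show "\<And>i j S T. i \<in> J \<Longrightarrow> j \<in> J \<Longrightarrow> i \<noteq> j \<Longrightarrow> S \<subseteq> I - F j \<Longrightarrow> T \<subseteq> F j \<Longrightarrow> B i (S \<union> T) = B i S"
        using insert.prems(2) by blast
      show "\<And>j S. j \<in> J \<Longrightarrow> S \<subseteq> I - F j \<Longrightarrow> PP (F j) p (\<lambda>T. B j (S \<union> T)) \<le> r"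
        using insert.prems(3) by simp
    qed
  qed
  finally show ?case using insert.hyps by simp
qed

lemma PP_or:
  assumes "0 \<le> p" "p \<le> 1"
  shows "PP I p (\<lambda>E. Q E \<or> R E) \<le> PP I p Q + PP I p R"
  unfolding PP_def sum.distrib[symmetric] using assms by (intro sum_mono) (auto simp: wt_nonneg)

lemma PP_two:
  assumes "e1 \<noteq> e2"
  shows "PP {e1, e2} p Q = (if Q {} then (1 - p)^2 else 0) + (if Q {e1} then p * (1 - p) else 0)
     + (if Q {e2} then p * (1 - p) else 0) + (if Q {e1, e2} then p^2 else 0)"
proof -
  have P: "Pow {e1, e2} = {{}, {e1}, {e2}, {e1, e2}}" by (auto simp: Pow_insert)
  show ?thesis unfolding PP_def P using assms
    by (simp add: wt_def doubleton_eq_iff insert_commute power2_eq_square)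
qed



lemma card_ksets_le: "card {A. A \<subseteq> {..<n} \<and> card A = k} \<le> n ^ k"
proof -
  have "card {A. A \<subseteq> {..<n} \<and> card A = k} = n choose k" using n_subsets[of "{..<n}" k] by simp
  also have "\<dots> \<le> n ^ k"
  proof (cases "k \<le> n")
    case True then show ?thesis by (rule binomial_le_pow)
  next
    case False then show ?thesis by (simp add: binomial_eq_0)
  qed
  finally show ?thesis .
qed

lemma good2_bound:
  assumes "0 \<le> p" "p \<le> 1"
  shows "PP (all_edges n) p (\<lambda>E. \<not> good2 n k E) \<le> real n ^ (2 * k) * (1 - p) ^ (k * k)"
proof -
  define K where "K = {A. A \<subseteq> {..<n} \<and> card A = k}"
  define Pairs where "Pairs = {(A, B). A \<in> K \<and> B \<in> K \<and> A \<inter> B = {}}"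
  define FAB where "FAB = (\<lambda>(A, B). (\<lambda>(a, b). {a, b}) ` (A \<times> (B::nat set)))"
  have fK: "finite K" unfolding K_def by (rule finite_subset[of _ "Pow {..<n}"]) auto
  have fP: "finite Pairs" unfolding Pairs_def
    by (rule finite_subset[of _ "K \<times> K"]) (use fK in auto)
  have cP: "card Pairs \<le> n ^ (2 * k)"
  proof -
    have "card Pairs \<le> card (K \<times> K)" unfolding Pairs_def by (rule card_mono) (use fK in auto)
    also have "\<dots> = card K * card K" by (simp add: card_cartesian_product)
    also have "\<dots> \<le> n ^ k * n ^ k" using card_ksets_le[of n k] unfolding K_def by (intro mult_mono) auto
    also have "\<dots> = n ^ (2 * k)" by (simp add: power_add[symmetric] mult_2)
    finally show ?thesis .
  qed
  have each: "PP (all_edges n) p (\<lambda>E. E \<inter> FAB AB = {}) \<le> (1 - p) ^ (k * k)" if AB: "AB \<in> Pairs" for AB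
  proof -
    obtain A B where AB': "AB = (A, B)" "A \<subseteq> {..<n}" "B \<subseteq> {..<n}" "A \<inter> B = {}" "card A = k" "card B = k"
      using AB by (auto simp: Pairs_def K_def)
    have fA: "finite A" "finite B" using AB' finite_subset by blast+
    have inj: "inj_on (\<lambda>(a, b). {a, b}) (A \<times> B)"
      using AB'(4) by (auto simp: inj_on_def doubleton_eq_iff)
    have cF: "card (FAB AB) = k * k"
      using card_image[OF inj] AB' fA by (simp add: FAB_def card_cartesian_product)
    have sub: "FAB AB \<subseteq> all_edges n"
    proof
      fix e assume "e \<in> FAB AB"
      then obtain a b where "a \<in> A" "b \<in> B" "e = {a, b}" using AB'(1) by (auto simp: FAB_def)
      moreover have "a \<noteq> b" using AB'(4) calculation by blast
      ultimately show "e \<in> all_edges n" using AB'(2,3) by (auto simp: all_edges_def)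
    qed
    show ?thesis using PP_avoid[OF all_edges_finite sub assms] cF by simp
  qed
  have "PP (all_edges n) p (\<lambda>E. \<not> good2 n k E) \<le> PP (all_edges n) p (\<lambda>E. \<exists>AB\<in>Pairs. E \<inter> FAB AB = {})"
  proof (rule PP_mono[OF assms])
    fix E assume "\<not> good2 n k E"
    then obtain A B where AB: "A \<subseteq> {..<n}" "B \<subseteq> {..<n}" "A \<inter> B = {}" "card A = k" "card B = k"
      "\<not> (\<exists>a\<in>A. \<exists>b\<in>B. {a, b} \<in> E)" unfolding good2_def by blast
    then have "(A, B) \<in> Pairs" by (simp add: Pairs_def K_def)
    moreover have "E \<inter> FAB (A, B) = {}" using AB(6) by (auto simp: FAB_def)
    ultimately show "\<exists>AB\<in>Pairs. E \<inter> FAB AB = {}" by blast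
  qed
  also have "\<dots> \<le> (\<Sum>AB\<in>Pairs. PP (all_edges n) p (\<lambda>E. E \<inter> FAB AB = {}))"
    by (rule PP_union[OF assms fP])
  also have "\<dots> \<le> (\<Sum>AB\<in>Pairs. (1 - p) ^ (k * k))" by (rule sum_mono) (rule each)
  also have "\<dots> = real (card Pairs) * (1 - p) ^ (k * k)" by simp
  also have "\<dots> \<le> real n ^ (2 * k) * (1 - p) ^ (k * k)"
    using cP assms by (intro mult_right_mono) (auto simp flip: of_nat_power)
  finally show ?thesis .
qed



definition gv :: "nat \<Rightarrow> nat \<Rightarrow> nat" where "gv v j = (if j < v then j else Suc j)"
definition av :: "nat \<Rightarrow> nat \<Rightarrow> nat" where "av v i = gv v (2 * i)"
definition bv :: "nat \<Rightarrow> nat \<Rightarrow> nat" where "bv v i = gv v (Suc (2 * i))"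
definition Xv :: "nat \<Rightarrow> nat \<Rightarrow> nat set set \<Rightarrow> bool" where
  "Xv v i E \<longleftrightarrow> {v, av v i} \<in> E \<and> odd (degree E (av v i))"
definition Fv :: "nat \<Rightarrow> nat \<Rightarrow> nat set set" where
  "Fv v i = {{v, av v i}, {av v i, bv v i}}"

lemma gv_ne: "gv v j \<noteq> v" by (simp add: gv_def)
lemma gv_inj: "gv v i = gv v j \<longleftrightarrow> i = j" by (auto simp: gv_def)
lemma gv_lt: "j < n - 1 \<Longrightarrow> v < n \<Longrightarrow> gv v j < n" by (auto simp: gv_def)

lemma ab_facts:
  assumes "v < n" "i < (n - 1) div 2"
  shows "av v i < n" "bv v i < n" "av v i \<noteq> v" "bv v i \<noteq> v" "av v i \<noteq> bv v i"
  using assms by (auto simp: av_def bv_def gv_ne gv_inj intro!: gv_lt)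

lemma av_inj: "av v i = av v j \<longleftrightarrow> i = j" by (simp add: av_def gv_inj)
lemma av_bv: "av v i \<noteq> bv v j" by (simp add: av_def bv_def gv_inj) presburger

lemma Fv_sub: "v < n \<Longrightarrow> i < (n - 1) div 2 \<Longrightarrow> Fv v i \<subseteq> all_edges n"
  using ab_facts[of v n i] by (auto simp: Fv_def all_edges_def)

lemma nbr_finite: "S \<subseteq> all_edges n \<Longrightarrow> finite {u. {u, a} \<in> S}"
  by (rule finite_subset[of _ "{..<n}"]) (auto dest: edge_mem_lt)

lemma deg_insert:
  assumes "{c, a} \<notin> S" "c \<noteq> a" "finite {u. {u, a} \<in> S}"
  shows "degree (insert {c, a} S) a = Suc (degree S a)"
proof -
  have "{u. {u, a} \<in> insert {c, a} S} = insert c {u. {u, a} \<in> S}"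
    using assms(2) by (auto simp: doubleton_eq_iff)
  moreover have "c \<notin> {u. {u, a} \<in> S}" using assms(1) by simp
  ultimately show ?thesis using assms(3) by (simp add: degree_def)
qed

lemma X_inv:
  assumes "v < n" "i < (n - 1) div 2" "j < (n - 1) div 2" "i \<noteq> j" "T \<subseteq> Fv v j"
  shows "Xv v i (S \<union> T) = Xv v i S"
proof -
  have aj: "av v i \<noteq> av v j" using assms(4) by (simp add: av_inj)
  have nF: "{u, av v i} \<notin> Fv v j" for u
    using aj av_bv[of v i j] ab_facts[OF assms(1,2)] by (auto simp: Fv_def doubleton_eq_iff)
  have nF2: "{v, av v i} \<notin> Fv v j"
    using aj av_bv[of v i j] ab_facts[OF assms(1,2)] ab_facts[OF assms(1,3)] by (auto simp: Fv_def doubleton_eq_iff)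
  have "{u. {u, av v i} \<in> S \<union> T} = {u. {u, av v i} \<in> S}" using nF assms(5) by auto
  moreover have "{v, av v i} \<in> S \<union> T \<longleftrightarrow> {v, av v i} \<in> S" using nF2 assms(5) by auto
  ultimately show ?thesis by (simp add: Xv_def degree_def)
qed

lemma X_bd:
  assumes p: "0 \<le> p" "p \<le> 1" and v: "v < n" and j: "j < (n - 1) div 2"
    and S: "S \<subseteq> all_edges n - Fv v j"
  shows "PP (Fv v j) p (\<lambda>T. \<not> Xv v j (S \<union> T)) \<le> 1 - p * min p (1 - p)"
proof -
  define a where "a = av v j"
  define b where "b = bv v j"
  have ab: "a \<noteq> v" "b \<noteq> v" "a \<noteq> b" using ab_facts[OF v j] by (auto simp: a_def b_def)
  define e1 where "e1 = {v, a}"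
  define e2 where "e2 = {b, a}"
  have F: "Fv v j = {e1, e2}" by (simp add: Fv_def e1_def e2_def a_def b_def insert_commute)
  have ne: "e1 \<noteq> e2" using ab by (auto simp: e1_def e2_def doubleton_eq_iff)
  have e1S: "e1 \<notin> S" and e2S: "e2 \<notin> S" using S F by auto
  have Sall: "S \<subseteq> all_edges n" using S by blast
  have fin: "finite {u. {u, a} \<in> S}" by (rule nbr_finite[OF Sall])
  have Sall2: "insert e2 S \<subseteq> all_edges n" using Sall F Fv_sub[OF v j] by auto
  have fin2: "finite {u. {u, a} \<in> insert e2 S}" by (rule nbr_finite[OF Sall2])
  define d where "d = degree S a"
  have d1: "degree (insert e1 S) a = Suc d" unfolding e1_def d_def
    by (rule deg_insert) (use e1S ab fin in \<open>auto simp: e1_def\<close>)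
  have d2: "degree (insert e2 S) a = Suc d" unfolding e2_def d_def
    by (rule deg_insert) (use e2S ab fin in \<open>auto simp: e2_def\<close>)
  have d12: "degree (insert e1 (insert e2 S)) a = Suc (Suc d)" unfolding e1_def d2[symmetric]
    by (rule deg_insert) (use e1S ab fin2 ne in \<open>auto simp: e1_def\<close>)
  have X0: "\<not> Xv v j S" using e1S by (simp add: Xv_def e1_def a_def)
  have X1: "Xv v j (insert e1 S) \<longleftrightarrow> even d" using d1 by (simp add: Xv_def e1_def a_def)
  have X2: "\<not> Xv v j (insert e2 S)" using e1S ne by (simp add: Xv_def e1_def a_def)
  have X12: "Xv v j (insert e1 (insert e2 S)) \<longleftrightarrow> odd d" using d12 by (simp add: Xv_def e1_def a_def)
  have "PP (Fv v j) p (\<lambda>T. \<not> Xv v j (S \<union> T)) = (1 - p)^2 + p * (1 - p)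
      + (if odd d then p * (1 - p) else 0) + (if even d then p^2 else 0)"
    unfolding F PP_two[OF ne] using X0 X1 X2 X12 by (simp add: insert_commute)
  also have "\<dots> \<le> 1 - p * min p (1 - p)"
  proof (cases "even d")
    case True
    have "p * min p (1 - p) \<le> p * (1 - p)" using p by (intro mult_left_mono) auto
    then show ?thesis using True by (simp add: power2_eq_square algebra_simps)
  next
    case False
    have "p * min p (1 - p) \<le> p * p" using p by (intro mult_left_mono) auto
    then show ?thesis using False by (simp add: power2_eq_square algebra_simps)
  qed
  finally show ?thesis .
qed

lemma block_bd:
  assumes p: "0 \<le> p" "p \<le> 1" and v: "v < n" and J: "J \<subseteq> {..<(n - 1) div 2}"
  shows "PP (all_edges n) p (\<lambda>E. \<forall>i\<in>J. \<not> Xv v i E) \<le> (1 - p * min p (1 - p)) ^ card J"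
proof (rule PP_prod[OF all_edges_finite])
  show "finite J" using J finite_subset by blast
  show "0 \<le> p" "p \<le> 1" by (rule p)+
  have "p * min p (1 - p) \<le> p * 1" using p by (intro mult_left_mono) auto
  then show "0 \<le> 1 - p * min p (1 - p)" using p by simp
  show "\<And>j. j \<in> J \<Longrightarrow> Fv v j \<subseteq> all_edges n" using Fv_sub[OF v] J by blast
  show "\<And>i j S T. i \<in> J \<Longrightarrow> j \<in> J \<Longrightarrow> i \<noteq> j \<Longrightarrow> S \<subseteq> all_edges n - Fv v j \<Longrightarrow> T \<subseteq> Fv v j
      \<Longrightarrow> (\<not> Xv v i (S \<union> T)) = (\<not> Xv v i S)"
    using X_inv[OF v] J by blast
  show "\<And>j S. j \<in> J \<Longrightarrow> S \<subseteq> all_edges n - Fv v j \<Longrightarrow> PP (Fv v j) p (\<lambda>T. \<not> Xv v j (S \<union> T)) \<le> 1 - p * min p (1 - p)"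
    using X_bd[OF p v] J by blast
qed

lemma good1_fail:
  assumes v: "v < n" and hML: "Mc * L \<le> (n - 1) div 2"
    and F: "\<not> Mc \<le> card ({z. {v, z} \<in> E} \<inter> odd_vertices n E)"
  shows "\<exists>t<Mc. \<forall>i\<in>{t * L..<t * L + L}. \<not> Xv v i E"
proof (rule ccontr)
  assume "\<not> ?thesis"
  then have H: "\<forall>t<Mc. \<exists>i. i \<in> {t * L..<t * L + L} \<and> Xv v i E" by blast
  define f where "f t = (SOME i. i \<in> {t * L..<t * L + L} \<and> Xv v i E)" for t
  have f: "f t \<in> {t * L..<t * L + L}" "Xv v (f t) E" if "t < Mc" for t
    using someI_ex[OF H[rule_format, OF that]] by (auto simp: f_def)
  have fN: "f t < (n - 1) div 2" if "t < Mc" for t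
  proof -
    have "Suc t * L \<le> Mc * L" using that by (intro mult_right_mono) auto
    then show ?thesis using f(1)[OF that] hML by simp
  qed
  have inj: "inj_on (\<lambda>t. av v (f t)) {..<Mc}"
  proof (rule inj_onI)
    fix t t' assume tt: "t \<in> {..<Mc}" "t' \<in> {..<Mc}" "av v (f t) = av v (f t')"
    then have eq: "f t = f t'" by (simp add: av_inj)
    have b1: "t * L \<le> f t" "f t < t * L + L" using f(1) tt(1) by auto
    have b2: "t' * L \<le> f t" "f t < t' * L + L" using f(1) tt(2) eq by auto
    show "t = t'"
    proof (rule ccontr)
      assume "t \<noteq> t'"
      then consider "t < t'" | "t' < t" by linarith
      then show False
      proof cases
        case 1
        then have "Suc t * L \<le> t' * L" by (intro mult_right_mono) auto
        then show False using b1 b2 by simp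
      next
        case 2
        then have "Suc t' * L \<le> t * L" by (intro mult_right_mono) auto
        then show False using b1 b2 by simp
      qed
    qed
  qed
  have sub: "(\<lambda>t. av v (f t)) ` {..<Mc} \<subseteq> {z. {v, z} \<in> E} \<inter> odd_vertices n E"
  proof
    fix z assume "z \<in> (\<lambda>t. av v (f t)) ` {..<Mc}"
    then obtain t where t: "t < Mc" "z = av v (f t)" by auto
    have "z < n" using ab_facts(1)[OF v fN[OF t(1)]] t by simp
    then show "z \<in> {z. {v, z} \<in> E} \<inter> odd_vertices n E"
      using f(2)[OF t(1)] t by (auto simp: Xv_def odd_vertices_def)
  qed
  have fin: "finite ({z. {v, z} \<in> E} \<inter> odd_vertices n E)"
    by (rule finite_subset[of _ "{..<n}"]) (auto simp: odd_vertices_def)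
  have "Mc = card ((\<lambda>t. av v (f t)) ` {..<Mc})" using card_image[OF inj] by simp
  also have "\<dots> \<le> card ({z. {v, z} \<in> E} \<inter> odd_vertices n E)" by (rule card_mono[OF fin sub])
  finally show False using F by simp
qed

lemma good1_bound:
  assumes p: "0 \<le> p" "p \<le> 1" and hML: "Mc * L \<le> (n - 1) div 2"
  shows "PP (all_edges n) p (\<lambda>E. \<exists>v<n. \<not> Mc \<le> card ({z. {v, z} \<in> E} \<inter> odd_vertices n E))
    \<le> real n * real Mc * (1 - p * min p (1 - p)) ^ L"
proof -
  have "PP (all_edges n) p (\<lambda>E. \<exists>v<n. \<not> Mc \<le> card ({z. {v, z} \<in> E} \<inter> odd_vertices n E))
     \<le> PP (all_edges n) p (\<lambda>E. \<exists>vt\<in>{..<n} \<times> {..<Mc}. \<forall>i\<in>{snd vt * L..<snd vt * L + L}. \<not> Xv (fst vt) i E)"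
  proof (rule PP_mono[OF p])
    fix E assume "\<exists>v<n. \<not> Mc \<le> card ({z. {v, z} \<in> E} \<inter> odd_vertices n E)"
    then obtain v where v: "v < n" "\<not> Mc \<le> card ({z. {v, z} \<in> E} \<inter> odd_vertices n E)" by blast
    obtain t where "t < Mc" "\<forall>i\<in>{t * L..<t * L + L}. \<not> Xv v i E" using good1_fail[OF v(1) hML v(2)] by blast
    then show "\<exists>vt\<in>{..<n} \<times> {..<Mc}. \<forall>i\<in>{snd vt * L..<snd vt * L + L}. \<not> Xv (fst vt) i E"
      using v(1) by (intro bexI[of _ "(v, t)"]) auto
  qed
  also have "\<dots> \<le> (\<Sum>vt\<in>{..<n} \<times> {..<Mc}. PP (all_edges n) p (\<lambda>E. \<forall>i\<in>{snd vt * L..<snd vt * L + L}. \<not> Xv (fst vt) i E))"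
    by (rule PP_union[OF p]) simp
  also have "\<dots> \<le> (\<Sum>vt\<in>{..<n} \<times> {..<Mc}. (1 - p * min p (1 - p)) ^ L)"
  proof (rule sum_mono)
    fix vt assume vt: "vt \<in> {..<n} \<times> {..<Mc}"
    have J: "{snd vt * L..<snd vt * L + L} \<subseteq> {..<(n - 1) div 2}"
    proof -
      have "Suc (snd vt) * L \<le> Mc * L" using vt by (intro mult_right_mono) auto
      then show ?thesis using hML by auto
    qed
    show "PP (all_edges n) p (\<lambda>E. \<forall>i\<in>{snd vt * L..<snd vt * L + L}. \<not> Xv (fst vt) i E) \<le> (1 - p * min p (1 - p)) ^ L"
      using block_bd[OF p _ J, of "fst vt"] vt by (auto simp: mem_Times_iff)
  qed
  also have "\<dots> = real n * real Mc * (1 - p * min p (1 - p)) ^ L" by (simp add: card_cartesian_product)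
  finally show ?thesis .
qed



lemma main_bound:
  fixes p :: real
  assumes p: "0 < p" "p < 1" and n: "2 \<le> n"
  defines "q \<equiv> p * min p (1 - p)"
  defines "c1 \<equiv> - ln (1 - q)" and "c2 \<equiv> - ln (1 - p)"
  defines "x \<equiv> real n powr (1/4)"
  shows "1 - real n * (4 * x + 2) * exp (- c1 * (((real n - 2) / 2) / (4 * x + 2) - 1))
           - exp (2 * x * ln (real n) - c2 * (x - 1)^2)
         \<le> gnp_prob n p (\<lambda>E. induced_has_perfect_matching E (odd_vertices n E))"
proof -
  have p01: "0 \<le> p" "p \<le> 1" using p by auto
  define k where "k = nat \<lfloor>x\<rfloor>"
  define Mc where "Mc = 4 * k + 2"
  define N where "N = (n - 1) div 2"
  define L where "L = N div Mc"
  have x0: "x \<ge> 1" unfolding x_def using n by (simp add: ge_one_powr_ge_zero)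
  have kx: "real k \<le> x" "x - 1 \<le> real k"
    using x0 by (auto simp: k_def)
  have Mcx: "real Mc \<le> 4 * x + 2" using kx by (simp add: Mc_def)
  have hML: "Mc * L \<le> (n - 1) div 2" by (simp add: L_def N_def)
  have q01: "0 < q" "q < 1"
  proof -
    have "0 < min p (1 - p)" using p by simp
    then show "0 < q" using p by (simp add: q_def)
    have "min p (1 - p) < 1" using p by simp
    then have "q < p * 1" unfolding q_def using p by (intro mult_strict_left_mono) auto
    then show "q < 1" using p by simp
  qed
  have B1: "PP (all_edges n) p (\<lambda>E. \<exists>v<n. \<not> Mc \<le> card ({z. {v, z} \<in> E} \<inter> odd_vertices n E))
      \<le> real n * (4 * x + 2) * exp (- c1 * (((real n - 2) / 2) / (4 * x + 2) - 1))"
  proof -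
    have h: "n \<le> 2 * N + 2" unfolding N_def by presburger
    then have "real n \<le> real (2 * N + 2)" by (simp only: of_nat_le_iff)
    then have "real N \<ge> (real n - 2) / 2" by simp
    have Mpos: "0 < real Mc" by (simp add: Mc_def)
    have "real N < real Mc * (real L + 1)"
    proof -
      have "N = Mc * L + N mod Mc" by (simp add: L_def)
      moreover have "N mod Mc < Mc" using Mpos by simp
      ultimately have "N < Mc * (L + 1)" by (metis add_less_cancel_left distrib_left mult.right_neutral)
      then show ?thesis by (metis of_nat_add of_nat_less_iff of_nat_mult of_nat_1)
    qed
    then have "real N / real Mc - 1 < real L" using Mpos by (simp add: field_simps)
    moreover have "((real n - 2) / 2) / (4 * x + 2) \<le> real N / real Mc"
    proof -
      have "((real n - 2) / 2) / (4 * x + 2) \<le> ((real n - 2) / 2) / real Mc"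
        using Mcx Mpos n by (intro divide_left_mono) auto
      also have "\<dots> \<le> real N / real Mc" using \<open>real N \<ge> (real n - 2) / 2\<close> Mpos by (intro divide_right_mono) auto
      finally show ?thesis .
    qed
    ultimately have Lb: "((real n - 2) / 2) / (4 * x + 2) - 1 \<le> real L" by linarith
    have c1p: "0 < c1" unfolding c1_def using q01 by simp
    have "exp (real L * ln (1 - q)) = exp (ln (1 - q)) ^ L" by (rule exp_of_nat_mult)
    then have "(1 - q) ^ L = exp (- c1 * real L)"
      using q01 by (simp add: c1_def mult.commute)
    also have "\<dots> \<le> exp (- c1 * (((real n - 2) / 2) / (4 * x + 2) - 1))"
      using Lb c1p by simp
    finally have e: "(1 - q) ^ L \<le> exp (- c1 * (((real n - 2) / 2) / (4 * x + 2) - 1))" .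
    have "PP (all_edges n) p (\<lambda>E. \<exists>v<n. \<not> Mc \<le> card ({z. {v, z} \<in> E} \<inter> odd_vertices n E))
        \<le> real n * real Mc * (1 - q) ^ L"
      unfolding q_def by (rule good1_bound[OF p01 hML])
    also have "\<dots> \<le> real n * (4 * x + 2) * exp (- c1 * (((real n - 2) / 2) / (4 * x + 2) - 1))"
      using q01 Mcx e by (intro mult_mono) auto
    finally show ?thesis .
  qed
  have B2: "PP (all_edges n) p (\<lambda>E. \<not> good2 n k E) \<le> exp (2 * x * ln (real n) - c2 * (x - 1)^2)"
  proof -
    have n0: "0 < real n" using n by simp
    have c2p: "0 < c2" unfolding c2_def using p by simp
    have "real n ^ (2 * k) * (1 - p) ^ (k * k) = exp (real (2 * k) * ln (real n)) * exp (real (k * k) * ln (1 - p))"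
    proof -
      have "exp (real (2 * k) * ln (real n)) = exp (ln (real n)) ^ (2 * k)" by (rule exp_of_nat_mult)
      moreover have "exp (real (k * k) * ln (1 - p)) = exp (ln (1 - p)) ^ (k * k)" by (rule exp_of_nat_mult)
      ultimately show ?thesis using n0 p by simp
    qed
    also have "\<dots> = exp (2 * real k * ln (real n) - c2 * (real k)^2)"
      by (simp add: c2_def exp_add[symmetric] power2_eq_square algebra_simps)
    also have "\<dots> \<le> exp (2 * x * ln (real n) - c2 * (x - 1)^2)"
    proof -
      have "2 * real k * ln (real n) \<le> 2 * x * ln (real n)" using kx n by (intro mult_right_mono) auto
      moreover have "(x - 1)^2 \<le> (real k)^2" using kx x0 by (intro power_mono) auto
      moreover have "c2 * (x - 1)^2 \<le> c2 * (real k)^2" using c2p \<open>(x - 1)^2 \<le> (real k)^2\<close>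
        by (intro mult_left_mono) auto
      ultimately show ?thesis by simp
    qed
    finally show ?thesis using good2_bound[OF p01, of n k] by simp
  qed
  let ?G1 = "\<lambda>E. \<forall>v<n. Mc \<le> card ({z. {v, z} \<in> E} \<inter> odd_vertices n E)"
  have "PP (all_edges n) p (\<lambda>E. ?G1 E \<and> good2 n k E)
      \<le> PP (all_edges n) p (\<lambda>E. induced_has_perfect_matching E (odd_vertices n E))"
  proof (rule PP_mono[OF p01])
    fix E assume "E \<subseteq> all_edges n" "?G1 E \<and> good2 n k E"
    then show "induced_has_perfect_matching E (odd_vertices n E)"
      using det_pm[of E n k] by (simp add: Mc_def)
  qed
  moreover have "PP (all_edges n) p (\<lambda>E. ?G1 E \<and> good2 n k E)
      = 1 - PP (all_edges n) p (\<lambda>E. \<not> (?G1 E \<and> good2 n k E))"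
    by (rule PP_compl[OF all_edges_finite])
  moreover have "PP (all_edges n) p (\<lambda>E. \<not> (?G1 E \<and> good2 n k E))
      \<le> PP (all_edges n) p (\<lambda>E. \<exists>v<n. \<not> Mc \<le> card ({z. {v, z} \<in> E} \<inter> odd_vertices n E))
        + PP (all_edges n) p (\<lambda>E. \<not> good2 n k E)"
  proof -
    have "PP (all_edges n) p (\<lambda>E. \<not> (?G1 E \<and> good2 n k E))
      = PP (all_edges n) p (\<lambda>E. (\<exists>v<n. \<not> Mc \<le> card ({z. {v, z} \<in> E} \<inter> odd_vertices n E)) \<or> \<not> good2 n k E)"
      unfolding PP_def by (intro sum.cong refl) auto
    then show ?thesis using PP_or[OF p01] by simp
  qed
  ultimately show ?thesis using B1 B2 by (simp add: gnp_PP)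
qed

theorem lemma3p6:
  fixes p :: real
  assumes "0 < p" and "p < 1"
  shows "(\<lambda>n. gnp_prob n p (\<lambda>E. induced_has_perfect_matching E (odd_vertices n E)))
           \<longlonglongrightarrow> 1"
proof -
  define q where "q = p * min p (1 - p)"
  define c1 where "c1 = - ln (1 - q)"
  define c2 where "c2 = - ln (1 - p)"
  have q01: "0 < q" "q < 1"
  proof -
    have "0 < min p (1 - p)" using assms by simp
    then show "0 < q" using assms by (simp add: q_def)
    have "min p (1 - p) < 1" using assms by simp
    then have "q < p * 1" unfolding q_def using assms by (intro mult_strict_left_mono) auto
    then show "q < 1" using assms by simp
  qed
  have c1p: "0 < c1" unfolding c1_def using q01 by simp
  have c2p: "0 < c2" unfolding c2_def using assms by simp
  have U1: "(\<lambda>n::nat. real n * (4 * real n powr (1/4) + 2) * exp (- c1 * (((real n - 2) / 2) / (4 * real n powr (1/4) + 2) - 1))) \<longlonglongrightarrow> 0"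
    using c1p by real_asymp
  have U2: "(\<lambda>n::nat. exp (2 * real n powr (1/4) * ln (real n) - c2 * (real n powr (1/4) - 1)^2)) \<longlonglongrightarrow> 0"
    using c2p by real_asymp
  have L: "(\<lambda>n::nat. 1 - real n * (4 * real n powr (1/4) + 2) * exp (- c1 * (((real n - 2) / 2) / (4 * real n powr (1/4) + 2) - 1))
       - exp (2 * real n powr (1/4) * ln (real n) - c2 * (real n powr (1/4) - 1)^2)) \<longlonglongrightarrow> 1"
    using tendsto_diff[OF tendsto_diff[OF tendsto_const[of 1] U1] U2] by simp
  show ?thesis
  proof (rule tendsto_sandwich[OF _ _ L tendsto_const[of 1]])
    show "\<forall>\<^sub>F n in sequentially. 1 - real n * (4 * real n powr (1/4) + 2) * exp (- c1 * (((real n - 2) / 2) / (4 * real n powr (1/4) + 2) - 1))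
       - exp (2 * real n powr (1/4) * ln (real n) - c2 * (real n powr (1/4) - 1)^2)
       \<le> gnp_prob n p (\<lambda>E. induced_has_perfect_matching E (odd_vertices n E))"
      using eventually_ge_at_top[of 2]
    proof eventually_elim
      case (elim n)
      show ?case using main_bound[OF assms elim] unfolding c1_def c2_def q_def .
    qed
    show "\<forall>\<^sub>F n in sequentially. gnp_prob n p (\<lambda>E. induced_has_perfect_matching E (odd_vertices n E)) \<le> 1"
      using assms by (intro always_eventually allI) (simp add: gnp_PP PP_le1 all_edges_finite)
  qed
qed

end
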